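(* Let $l>0$ and $K\in\mathbb{N}$ satisfy $2lK\ge T_0[\varphi_1]$ and $2l\in(0,\frac{2lK}{\ln(2lK)}]$. Put $\mathcal{J}(2l)=[2lK,2l(K+1)]$ and $\mathring{\mathcal{J}}(2l)=[\varphi_1^{-1}(2lK),\varphi_1^{-1}(2l(K+1))]$, so that $\varphi_1\{\mathring{\mathcal{J}}(2l)\}=\mathcal{J}(2l)$. Then the system $$\left\{1,\cos\left(\tfrac{\pi}{l}\varphi_1(t)\right),\sin\left(\tfrac{\pi}{l}\varphi_1(t)\right),\dots,\cos\left(\tfrac{\pi}{l}n\varphi_1(t)\right),\sin\left(\tfrac{\pi}{l}n\varphi_1(t)\right),\dots\right\}$$ is orthogonal on $\mathring{\mathcal{J}}(2l)$ with respect to the weight $\tilde Z^2(t)$; precisely, for all $m,n\in\mathbb{N}$: $$\int_{\mathring{\mathcal{J}}(2l)}\cos\left(\tfrac{\pi}{l}m\varphi_1(t)\right)\cos\left(\tfrac{\pi}{l}n\varphi_1(t)\right)\tilde Z^2(t)\,dt=\begin{cases}0,&m\ne n,\\ l,&m=n,\end{cases}$$ $$\int_{\mathring{\mathcal{J}}(2l)}\sin\left(\tfrac{\pi}{l}m\varphi_1(t)\right)\sin\left(\tfrac{\pi}{l}n\varphi_1(t)\right)\tilde Z^2(t)\,dt=\begin{cases}0,&m\ne n,\\ l,&m=n,\end{cases}$$ $$\int_{\mathring{\mathcal{J}}(2l)}\sin\left(\tfrac{\pi}{l}m\varphi_1(t)\right)\cos\left(\tfrac{\pi}{l}n\varphi_1(t)\right)\tilde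 Z^2(t)\,dt=0,$$ $$\int_{\mathring{\mathcal{J}}(2l)}\cos\left(\tfrac{\pi}{l}n\varphi_1(t)\right)\tilde Z^2(t)\,dt=0,\qquad \int_{\mathring{\mathcal{J}}(2l)}\sin\left(\tfrac{\pi}{l}n\varphi_1(t)\right)\tilde Z^2(t)\,dt=0.$$ Moreover, as $K\to\infty$ one has $2l(K+1)<\varphi_1^{-1}(2lK)$ and the distance $\rho$ between the segments $\mathcal{J}(2l)$ and $\mathring{\mathcal{J}}(2l)$ satisfies $\rho\{\mathcal{J}(2l);\mathring{\mathcal{J}}(2l)\}\sim(1-c)\pi(2lK)\to\infty$.
   Context: Let $Z(t)=e^{i\vartheta(t)}\zeta(\tfrac12+it)$ with $\vartheta(t)=-\frac t2\ln\pi+\operatorname{Im}\ln\Gamma(\frac14+\frac{it}{2})$ (so $Z$ is real). Let $\mu(y)$ be a continuous function with $\mu(y)\ge 7y\ln y$ and put $\Phi(\varphi)=\int_0^{\mu[\varphi]}Z^2(t)e^{-2t/\varphi}\,dt$. A Jacob's ladder is a continuous solution $\varphi(T)$, $T\ge T_0$, of the nonlinear integral equation $\Phi(\varphi(T))=\int_0^T Z^2(t)\,dt$ (as constructed in the author's earlier work). Put $\varphi_1(T)=\frac12\varphi(T)$, $T\ge T_0[\varphi_1]$, and $\tilde Z^2(t)=\frac{Z^2(t)}{2\Phi'(\varphi(t))}$, so that $\varphi_1'(t)=\tilde Z^2(t)$; it is known that $\tilde Z^2(t)=\frac{Z^2(t)}{(1+O(\ln\ln t/\ln t))\ln t}$ and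 $t-\varphi_1(t)\sim(1-c)\pi(t)$, where $c$ is Euler's constant and $\pi(t)$ is the prime-counting function. The function $\varphi_1$ is increasing, and $\varphi_1^{-1}(x)$ (written $\mathring{x}$ in the paper) denotes the unique $t$ with $\varphi_1(t)=x$. *)

theory Defs
  imports "HOL-Analysis.Analysis" "HOL-Library.Landau_Symbols" "HOL-Computational_Algebra.Primes"
begin

definition eta_fun :: "complex \<Rightarrow> complex" where
  "eta_fun s = lim (\<lambda>N. \<Sum>n<N. (-1) ^ n / (of_nat (Suc n) powr s))"

(* Riemann zeta on the critical line: zeta(s) = eta(s) / (1 - 2^(1-s)), valid for Re s > 0, s \<noteq> 1 *)
definition zeta_crit :: "real \<Rightarrow> complex" where
  "zeta_crit t = (let s = 1/2 + \<i> * of_real t in eta_fun s / (1 - 2 powr (1 - s)))"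

definition vartheta :: "real \<Rightarrow> real" where
  "vartheta t = - (t / 2) * ln pi + Im (ln_Gamma (1/4 + \<i> * of_real t / 2))"

(* Hardy's Z-function Z(t) = e^{i vartheta(t)} zeta(1/2+it) (real-valued) *)
definition Z_fun :: "real \<Rightarrow> real" where
  "Z_fun t = Re (exp (\<i> * of_real (vartheta t)) * zeta_crit t)"

definition Phi :: "(real \<Rightarrow> real) \<Rightarrow> real \<Rightarrow> real" where
  "Phi mu y = integral {0..mu y} (\<lambda>t. (Z_fun t)\<^sup>2 * exp (- 2 * t / y))"

definition jacobs_ladder :: "(real \<Rightarrow> real) \<Rightarrow> real \<Rightarrow> (real \<Rightarrow> real) \<Rightarrow> bool" where
  "jacobs_ladder mu T0 phi \<longleftrightarrow> continuous_on {T0..} phi \<and>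
     (\<forall>T\<ge>T0. Phi mu (phi T) = integral {0..T} (\<lambda>t. (Z_fun t)\<^sup>2))"

definition phi1 :: "(real \<Rightarrow> real) \<Rightarrow> real \<Rightarrow> real" where
  "phi1 phi T = phi T / 2"

definition Ztilde2 :: "(real \<Rightarrow> real) \<Rightarrow> (real \<Rightarrow> real) \<Rightarrow> real \<Rightarrow> real" where
  "Ztilde2 mu phi t = (Z_fun t)\<^sup>2 / (2 * deriv (Phi mu) (phi t))"

definition phi1_inv :: "(real \<Rightarrow> real) \<Rightarrow> real \<Rightarrow> real \<Rightarrow> real" where
  "phi1_inv phi T0 x = (THE t. t \<ge> T0 \<and> phi1 phi t = x)"

definition primepi :: "real \<Rightarrow> real" where
  "primepi x = real (card {p :: nat. prime p \<and> real p \<le> x})"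

end

theory Submission
  imports Defs "HOL-Number_Theory.Totient"
begin


lemma harm_le_prod:
  fixes N :: nat
  shows "harm N \<le> (\<Prod>p\<in>{p. prime p \<and> p \<le> N}. 1 / (1 - 1 / real p))"
proof -
  define S where "S = {p::nat. prime p \<and> p \<le> N}"
  have finS: "finite S" unfolding S_def by auto
  have pS: "p \<in> S \<Longrightarrow> p \<ge> 2" for p unfolding S_def using prime_ge_2_nat by auto
  define h where "h m = restrict (\<lambda>p. multiplicity p m) S" for m :: nat
  define F where "F f = (\<Prod>p\<in>S. (1 / real p) ^ f p)" for f :: "nat \<Rightarrow> nat"
  have repr: "m = (\<Prod>p\<in>S. p ^ multiplicity p m)" if "m \<in> {1..N}" for m
  proof -
    have "m = (\<Prod>p\<in>prime_factors m. p ^ multiplicity p m)"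
      using that by (intro prime_factorization_nat) auto
    also have "\<dots> = (\<Prod>p\<in>S. p ^ multiplicity p m)"
    proof (rule prod.mono_neutral_left[OF finS])
      show "prime_factors m \<subseteq> S"
        using that unfolding S_def
        by (auto simp: prime_factors_multiplicity intro: order.trans[OF dvd_imp_le[OF in_prime_factors_imp_dvd]])
      show "\<forall>i\<in>S - prime_factors m. i ^ multiplicity i m = 1"
        using that unfolding S_def by (auto simp: prime_factors_multiplicity)
    qed
    finally show ?thesis .
  qed
  have Fh: "F (h m) = 1 / real m" if "m \<in> {1..N}" for m
  proof -
    have "real m = (\<Prod>p\<in>S. real p ^ multiplicity p m)"
      using arg_cong[OF repr[OF that], of real] by simp
    then show ?thesis unfolding F_def h_def
      by (simp add: power_one_over prod_dividef)
  qed
  have inj: "inj_on h {1..N}"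
  proof
    fix m1 m2 assume "m1 \<in> {1..N}" "m2 \<in> {1..N}" "h m1 = h m2"
    then have "\<forall>p\<in>S. multiplicity p m1 = multiplicity p m2"
      unfolding h_def by (metis restrict_apply')
    then have "(\<Prod>p\<in>S. p ^ multiplicity p m1) = (\<Prod>p\<in>S. p ^ multiplicity p m2)"
      by simp
    with repr \<open>m1 \<in> _\<close> \<open>m2 \<in> _\<close> show "m1 = m2" by metis
  qed
  have img: "h ` {1..N} \<subseteq> PiE S (\<lambda>_. {..N})"
  proof
    fix f assume "f \<in> h ` {1..N}"
    then obtain m where m: "m \<in> {1..N}" "f = h m" by auto
    have "multiplicity p m \<le> N" if "p \<in> S" for p
    proof -
      have "p ^ multiplicity p m dvd m" by (rule multiplicity_dvd)
      then have "p ^ multiplicity p m \<le> m" using m by (intro dvd_imp_le) auto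
      moreover have l1: "multiplicity p m < 2 ^ multiplicity p m" by (rule less_exp)
      moreover have "2 ^ multiplicity p m \<le> p ^ multiplicity p m"
        using pS[OF that] by (intro power_mono) auto
      ultimately have "multiplicity p m < m" by linarith
      then show ?thesis using m by auto
    qed
    then show "f \<in> PiE S (\<lambda>_. {..N})" using m unfolding h_def by auto
  qed
  have "harm N = (\<Sum>m\<in>{1..N}. 1 / real m)"
    unfolding harm_def by (simp add: divide_inverse)
  also have "\<dots> = (\<Sum>m\<in>{1..N}. F (h m))" using Fh by simp
  also have "\<dots> = sum F (h ` {1..N})" using sum.reindex[OF inj, of F] by simp
  also have "\<dots> \<le> sum F (PiE S (\<lambda>_. {..N}))"
    by (rule sum_mono2[OF finite_PiE[OF finS] img]) (auto simp: F_def intro!: prod_nonneg)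
  also have "\<dots> = (\<Prod>p\<in>S. \<Sum>k\<in>{..N}. (1 / real p) ^ k)"
    unfolding F_def by (rule prod_sum_PiE[symmetric]) (use finS in auto)
  also have "\<dots> \<le> (\<Prod>p\<in>S. 1 / (1 - 1 / real p))"
  proof (rule prod_mono, safe)
    fix p assume "p \<in> S"
    then have p2: "real p \<ge> 2" using pS by auto
    then have lt: "norm (1 / real p) < 1" by auto
    show "0 \<le> (\<Sum>k\<in>{..N}. (1 / real p) ^ k)" by (intro sum_nonneg) auto
    have "(\<Sum>k\<in>{..N}. (1 / real p) ^ k) \<le> (\<Sum>k. (1 / real p) ^ k)"
      by (rule sum_le_suminf) (use summable_geometric[OF lt] in auto)
    also have "\<dots> = 1 / (1 - 1 / real p)" using suminf_geometric[OF lt] by simp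
    finally show "(\<Sum>k\<in>{..N}. (1 / real p) ^ k) \<le> 1 / (1 - 1 / real p)" .
  qed
  finally show ?thesis unfolding S_def .
qed

lemma small_prod_exists:
  assumes "e > (0::real)"
  shows "\<exists>N::nat. N \<ge> 1 \<and> (\<Prod>p\<in>{p. prime p \<and> p \<le> N}. 1 - 1 / real p) < e"
proof -
  have "eventually (\<lambda>N. harm N > 1 / e) sequentially"
    using harm_at_top filterlim_at_top_dense by blast
  moreover have "eventually (\<lambda>N::nat. N \<ge> 1) sequentially" by (rule eventually_ge_at_top)
  ultimately obtain N where N: "harm N > 1 / e" "N \<ge> 1"
    using eventually_happens'[OF sequentially_bot] by (metis (mono_tags, lifting) eventually_conj_iff eventually_sequentially order_refl)
  define S where "S = {p::nat. prime p \<and> p \<le> N}"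
  have pos: "p \<in> S \<Longrightarrow> 1 - 1 / real p > 0" for p
    unfolding S_def using prime_ge_2_nat[of p] by (auto simp: field_simps)
  have P: "(\<Prod>p\<in>S. 1 - 1 / real p) > 0" using pos by (intro prod_pos) auto
  have "(\<Prod>p\<in>S. 1 / (1 - 1 / real p)) = 1 / (\<Prod>p\<in>S. 1 - 1 / real p)"
    by (simp add: prod_dividef)
  with harm_le_prod[of N] N(1) have "1 / e < 1 / (\<Prod>p\<in>S. 1 - 1 / real p)"
    unfolding S_def by linarith
  with P assms have "(\<Prod>p\<in>S. 1 - 1 / real p) < e"
    by (simp add: field_simps)
  with N(2) show ?thesis unfolding S_def by blast
qed

lemma totient_fact_ratio:
  "real (totient (fact N)) = real (fact N) * (\<Prod>p\<in>{p. prime p \<and> p \<le> N}. 1 - 1 / real p)"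
proof -
  have "prime_factors (fact N) = {p. prime p \<and> p \<le> N}"
    by (auto simp: prime_factors_fact prime_ge_2_nat)
  then show ?thesis using totient_formula2[of "fact N"] by simp
qed

lemma block_count:
  fixes M a :: nat
  assumes "M > 0"
  shows "card {n. a < n \<and> n \<le> a + M \<and> coprime n M} = totient M"
proof (induction a)
  case 0
  have "{n. 0 < n \<and> n \<le> 0 + M \<and> coprime n M} = totatives M"
    by (auto simp: in_totatives_iff)
  then show ?case by (simp add: totient_def)
next
  case (Suc a)
  define A where "A = {n. a < n \<and> n \<le> a + M \<and> coprime n M}"
  have finA: "finite A" unfolding A_def by (rule finite_subset[of _ "{..a+M}"]) auto
  have cop: "coprime (Suc a + M) M \<longleftrightarrow> coprime (Suc a) M"
    by (metis gcd_add1 coprime_iff_gcd_eq_1)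
  show ?case
  proof (cases "coprime (Suc a) M")
    case True
    have eq: "{n. Suc a < n \<and> n \<le> Suc a + M \<and> coprime n M} = insert (Suc a + M) (A - {Suc a})"
      using True cop assms unfolding A_def by auto
    have "Suc a \<in> A" using True assms unfolding A_def by auto
    then have c1: "card (A - {Suc a}) = card A - 1" "card A > 0"
      using finA by (auto simp: card_gt_0_iff)
    have "Suc a + M \<notin> A - {Suc a}" unfolding A_def by auto
    then have "card (insert (Suc a + M) (A - {Suc a})) = card A"
      using finA c1 by (subst card_insert_disjoint) auto
    then show ?thesis using eq Suc.IH unfolding A_def by simp
  next
    case False
    have "{n. Suc a < n \<and> n \<le> Suc a + M \<and> coprime n M} = A"
      using False cop assms unfolding A_def by (auto simp: le_Suc_eq) (metis Suc_lessI)
    then show ?thesis using Suc.IH unfolding A_def by simp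
  qed
qed

lemma blocks_count:
  fixes M a q :: nat
  assumes "M > 0"
  shows "card {n. a < n \<and> n \<le> a + q * M \<and> coprime n M} = q * totient M"
proof (induction q)
  case 0
  then show ?case by (auto intro: card_eq_0_iff[THEN iffD2])
next
  case (Suc q)
  have eq: "{n. a < n \<and> n \<le> a + Suc q * M \<and> coprime n M} =
      {n. a < n \<and> n \<le> a + q * M \<and> coprime n M} \<union> {n. a + q * M < n \<and> n \<le> (a + q * M) + M \<and> coprime n M}"
    by auto
  have "card \<dots> = q * totient M + totient M"
    by (subst card_Un_disjoint)
       (auto intro: finite_subset[of _ "{..a+q*M+M}"] simp: Suc.IH block_count[OF assms])
  with eq show ?case by simp
qed

lemma primepi_nonneg: "primepi x \<ge> 0" by (simp add: primepi_def)

lemma primepi_mono: "x \<le> y \<Longrightarrow> primepi x \<le> primepi y"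
  unfolding primepi_def
  by (intro of_nat_mono card_mono) (auto intro: finite_subset[of _ "{..nat \<lfloor>y\<rfloor>}"] simp: le_nat_floor)

lemma primepi_finite: "finite {p :: nat. prime p \<and> real p \<le> x}"
  by (rule finite_subset[of _ "{..nat \<lfloor>x\<rfloor>}"]) (auto simp: le_nat_floor)

lemma primepi_le: "x \<ge> 0 \<Longrightarrow> primepi x \<le> x"
proof -
  assume x: "x \<ge> 0"
  have "{p :: nat. prime p \<and> real p \<le> x} \<subseteq> {1..nat \<lfloor>x\<rfloor>}"
    by (auto simp: le_nat_floor prime_gt_0_nat Suc_leI)
  then have "card {p :: nat. prime p \<and> real p \<le> x} \<le> nat \<lfloor>x\<rfloor>"
    using card_mono[of "{1..nat \<lfloor>x\<rfloor>}"] by fastforce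
  then have "primepi x \<le> real (nat \<lfloor>x\<rfloor>)" unfolding primepi_def by linarith
  also have "\<dots> \<le> x" using x by linarith
  finally show ?thesis .
qed

lemma primepi_at_top: "filterlim primepi at_top at_top"
unfolding filterlim_at_top
proof
  fix Z :: real
  have "infinite {p::nat. prime p}" by (rule primes_infinite)
  from infinite_arbitrarily_large[OF this, of "nat \<lceil>Z\<rceil>"]
  obtain B :: "nat set" where B0: "finite B \<and> card B = nat \<lceil>Z\<rceil> \<and> B \<subseteq> {p. prime p}"
    by (rule exE) (rule that)
  then have B: "finite B" "card B = nat \<lceil>Z\<rceil>" "B \<subseteq> {p. prime p}" by auto
  define b where "b = real (Max (insert 0 B))"
  have "eventually (\<lambda>x. x \<ge> b) at_top" by (rule eventually_ge_at_top)
  then show "eventually (\<lambda>x. Z \<le> primepi x) at_top"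
  proof eventually_elim
    case (elim x)
    have "B \<subseteq> {p :: nat. prime p \<and> real p \<le> x}"
    proof
      fix p assume "p \<in> B"
      then have "p \<le> Max (insert 0 B)" using B(1) by (simp add: Max_ge_iff)
      then have "real p \<le> b" unfolding b_def by linarith
      then show "p \<in> {p :: nat. prime p \<and> real p \<le> x}" using B(3) \<open>p \<in> B\<close> elim by auto
    qed
    then have "card B \<le> card {p :: nat. prime p \<and> real p \<le> x}"
      by (intro card_mono primepi_finite)
    moreover have "Z \<le> real (nat \<lceil>Z\<rceil>)" by linarith
    ultimately show ?case unfolding primepi_def using B(2) by (metis of_nat_mono order_trans)
  qed
qed

lemma sieve:
  assumes "e > (0::real)"
  shows "\<exists>C. \<forall>x y. x \<ge> C \<and> y \<ge> 0 \<longrightarrow> primepi (x + y) - primepi x \<le> e * y + C"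
proof -
  obtain N :: nat where N: "N \<ge> 1" "(\<Prod>p\<in>{p. prime p \<and> p \<le> N}. 1 - 1 / real p) < e"
    using small_prod_exists[OF assms] by blast
  define M :: nat where "M = fact N"
  have M0: "M > 0" unfolding M_def by simp
  define tot where "tot = totient M"
  have ratio: "real tot / real M < e"
    using totient_fact_ratio[of N] N(2) M0 unfolding tot_def M_def by simp
  define C where "C = real N + 2 * real tot"
  show ?thesis
  proof (intro exI allI impI, elim conjE)
    fix x y :: real assume x: "x \<ge> C" and y: "y \<ge> 0"
    have x0: "x \<ge> real N" using x unfolding C_def by simp
    define a where "a = nat \<lfloor>x\<rfloor>"
    define q where "q = nat \<lceil>y / real M\<rceil> + 1"
    have a1: "real a \<le> x" "x < real a + 1" unfolding a_def using x0 by linarith+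
    have yM: "y / real M \<ge> 0" using y M0 by simp
    then have cz: "real (nat \<lceil>y / real M\<rceil>) = real_of_int \<lceil>y / real M\<rceil>" by simp
    have q1: "real q \<le> y / real M + 2" unfolding q_def using cz ceiling_less_cancel by linarith
    have q2: "real q \<ge> y / real M + 1" unfolding q_def using cz by linarith
    have "real q * real M \<ge> (y / real M + 1) * real M"
      using q2 M0 by (intro mult_right_mono) auto
    moreover have "(y / real M + 1) * real M = y + real M" using M0 by (simp add: field_simps)
    moreover have "real M \<ge> 1" using M0 by simp
    ultimately have qM: "real q * real M \<ge> y + 1" by linarith
    define PS where "PS = {p :: nat. prime p \<and> real p \<le> x + y}"
    define PX where "PX = {p :: nat. prime p \<and> real p \<le> x}"
    have sub: "PX \<subseteq> PS" unfolding PS_def PX_def using y by auto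
    have finPS: "finite PS" unfolding PS_def by (rule primepi_finite)
    have "primepi (x + y) - primepi x = real (card PS) - real (card PX)"
      unfolding primepi_def PS_def PX_def by simp
    also have "\<dots> = real (card (PS - PX))"
      using card_Diff_subset[OF finite_subset[OF sub finPS] sub] card_mono[OF finPS sub]
      by (simp add: of_nat_diff)
    also have "card (PS - PX) \<le> card {n. a < n \<and> n \<le> a + q * M \<and> coprime n M}"
    proof (rule card_mono)
      show "finite {n. a < n \<and> n \<le> a + q * M \<and> coprime n M}"
        by (rule finite_subset[of _ "{..a + q * M}"]) auto
      show "PS - PX \<subseteq> {n. a < n \<and> n \<le> a + q * M \<and> coprime n M}"
      proof
        fix p assume "p \<in> PS - PX"
        then have p: "prime p" "real p \<le> x + y" "real p > x" unfolding PS_def PX_def by auto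
        have "real a < real p" using p a1 by linarith
        then have ap: "a < p" by simp
        have "real p \<le> real a + real q * real M" using p a1 qM by linarith
        then have pq: "p \<le> a + q * M" by (metis of_nat_add of_nat_le_iff of_nat_mult)
        have "p > N" using p x0 by (metis of_nat_less_iff order_le_less_trans)
        then have "\<not> p dvd M" unfolding M_def using prime_dvd_fact_iff[OF p(1)] by simp
        then have "coprime p M" using prime_imp_coprime[OF p(1)] by blast
        then show "p \<in> {n. a < n \<and> n \<le> a + q * M \<and> coprime n M}" using ap pq by auto
      qed
    qed
    then have "card (PS - PX) \<le> q * tot"
      unfolding tot_def using blocks_count[OF M0, of a q] by simp
    then have "real (card (PS - PX)) \<le> real (q * tot)" by (rule of_nat_mono)
    also have "\<dots> = real q * real tot" by simp
    also have "\<dots> \<le> (y / real M + 2) * real tot" using q1 by (intro mult_right_mono) auto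
    also have "\<dots> = y * (real tot / real M) + 2 * real tot" by (simp add: field_simps)
    also have "\<dots> \<le> e * y + C"
    proof -
      have "y * (real tot / real M) \<le> y * e" using ratio y by (intro mult_left_mono) auto
      then show ?thesis unfolding C_def by (simp add: mult.commute)
    qed
    finally show "primepi (x + y) - primepi x \<le> e * y + C" .
  qed
qed



lemma cv_integral:
  fixes f Zt F h :: "real \<Rightarrow> real"
  assumes der: "\<forall>t\<ge>T0. (f has_real_derivative Zt t) (at t within {T0..})"
    and s: "T0 \<le> s" "s \<le> s'"
    and F: "\<And>y. (F has_real_derivative h y) (at y)"
  shows "integral {s..s'} (\<lambda>t. h (f t) * Zt t) = F (f s') - F (f s)"
proof -
  have "((\<lambda>t. h (f t) * Zt t) has_integral (F \<circ> f) s' - (F \<circ> f) s) {s..s'}"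
  proof (rule fundamental_theorem_of_calculus[OF s(2)])
    fix t assume t: "t \<in> {s..s'}"
    have sub: "{s..s'} \<subseteq> {T0..}" using s by auto
    have "t \<ge> T0" using t s by auto
    then have "(f has_real_derivative Zt t) (at t within {T0..})" using der by blast
    then have "(f has_real_derivative Zt t) (at t within {s..s'})"
      using sub by (rule has_field_derivative_subset)
    from DERIV_chain2[OF F this]
    have "((\<lambda>t. F (f t)) has_real_derivative h (f t) * Zt t) (at t within {s..s'})" .
    then have "((\<lambda>t. F (f t)) has_vector_derivative h (f t) * Zt t) (at t within {s..s'})"
      by (simp only: has_real_derivative_iff_has_vector_derivative)
    then show "((F \<circ> f) has_vector_derivative h (f t) * Zt t) (at t within {s..s'})"
      by (simp only: o_def)
  qed
  then have "integral {s..s'} (\<lambda>t. h (f t) * Zt t) = (F \<circ> f) s' - (F \<circ> f) s"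
    by (rule integral_unique)
  then show ?thesis by simp
qed

lemma trig_end:
  fixes l k R :: real
  assumes "l \<noteq> 0" "k \<in> \<int>" "R \<in> \<int>"
  shows "sin (pi / l * k * (2 * l * R)) = 0" "cos (pi / l * k * (2 * l * R)) = 1"
proof -
  from assms(2) obtain i where i: "k = of_int i" by (auto elim: Ints_cases)
  from assms(3) obtain j where j: "R = of_int j" by (auto elim: Ints_cases)
  have "pi / l * k * (2 * l * R) = (2 * pi) * of_int (i * j)"
    using assms(1) unfolding i j by (simp add: field_simps)
  then show "sin (pi / l * k * (2 * l * R)) = 0" "cos (pi / l * k * (2 * l * R)) = 1"
    by (simp_all only: sin_int_2pin cos_int_2pin)
qed

lemma DERIV_S:
  fixes a k y :: real
  assumes "a * k \<noteq> 0"
  shows "((\<lambda>y. sin (a * k * y) / (a * k)) has_real_derivative cos (a * k * y)) (at y)"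
proof -
  have "((\<lambda>y. sin (a * k * y)) has_real_derivative cos (a * k * y) * (a * k)) (at y)"
    using DERIV_sin[THEN DERIV_chain2, OF DERIV_cmult[OF DERIV_ident, of "a * k" y]] by simp
  from DERIV_cdivide[OF this, of "a * k"] show ?thesis using assms by simp
qed

lemma DERIV_C:
  fixes a k y :: real
  assumes "a * k \<noteq> 0"
  shows "((\<lambda>y. - cos (a * k * y) / (a * k)) has_real_derivative sin (a * k * y)) (at y)"
proof -
  have "((\<lambda>y. cos (a * k * y)) has_real_derivative - sin (a * k * y) * (a * k)) (at y)"
    using DERIV_cos[THEN DERIV_chain2, OF DERIV_cmult[OF DERIV_ident, of "a * k" y]] by simp
  from DERIV_cdivide[OF DERIV_minus[OF this], of "a * k"] show ?thesis using assms by simp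
qed

definition SS :: "real \<Rightarrow> real \<Rightarrow> real \<Rightarrow> real" where
  "SS l k y = sin (pi / l * k * y) / (pi / l * k)"
definition CC :: "real \<Rightarrow> real \<Rightarrow> real \<Rightarrow> real" where
  "CC l k y = - cos (pi / l * k * y) / (pi / l * k)"

lemma SS_deriv: "l \<noteq> 0 \<Longrightarrow> k \<noteq> 0 \<Longrightarrow> (SS l k has_real_derivative cos (pi / l * k * y)) (at y)"
  unfolding SS_def[abs_def] by (rule DERIV_S) simp
lemma CC_deriv: "l \<noteq> 0 \<Longrightarrow> k \<noteq> 0 \<Longrightarrow> (CC l k has_real_derivative sin (pi / l * k * y)) (at y)"
  unfolding CC_def[abs_def] by (rule DERIV_C) simp

lemma SS_period: "l \<noteq> 0 \<Longrightarrow> k \<in> \<int> \<Longrightarrow> R \<in> \<int> \<Longrightarrow> SS l k (2 * l * (R + 1)) - SS l k (2 * l * R) = 0"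
  unfolding SS_def using trig_end[of l k R] trig_end[of l k "R + 1"] by simp
lemma CC_period: "l \<noteq> 0 \<Longrightarrow> k \<in> \<int> \<Longrightarrow> R \<in> \<int> \<Longrightarrow> CC l k (2 * l * (R + 1)) - CC l k (2 * l * R) = 0"
  unfolding CC_def using trig_end[of l k R] trig_end[of l k "R + 1"] by simp

lemma lin_comb:
  fixes m n y l :: real
  shows "pi / l * m * y - pi / l * n * y = pi / l * (m - n) * y"
    "pi / l * m * y + pi / l * n * y = pi / l * (m + n) * y"
  by (simp_all add: ring_distribs diff_divide_distrib add_divide_distrib)

lemma prod_ids:
  fixes m n y l :: real
  shows "cos (pi / l * m * y) * cos (pi / l * n * y) = (cos (pi / l * (m - n) * y) + cos (pi / l * (m + n) * y)) / 2"
    "sin (pi / l * m * y) * sin (pi / l * n * y) = (cos (pi / l * (m - n) * y) - cos (pi / l * (m + n) * y)) / 2"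
    "sin (pi / l * m * y) * cos (pi / l * n * y) = (sin (pi / l * (m + n) * y) + sin (pi / l * (m - n) * y)) / 2"
  by (simp_all only: cos_times_cos sin_times_sin sin_times_cos lin_comb)

lemma anti_cc:
  fixes l R :: real and m n :: nat
  assumes l: "l > 0" and R: "R \<in> \<int>" and mn: "m \<ge> 1" "n \<ge> 1"
  shows "\<exists>F. (\<forall>y. (F has_real_derivative cos (pi / l * real m * y) * cos (pi / l * real n * y)) (at y))
          \<and> F (2 * l * (R + 1)) - F (2 * l * R) = (if m = n then l else 0)"
proof (cases "m = n")
  case True
  define F where "F y = y / 2 + SS l (real m + real n) y / 2" for y
  have "(F has_real_derivative cos (pi / l * real m * y) * cos (pi / l * real n * y)) (at y)" for y
  proof -
    have "(F has_real_derivative 1 / 2 + cos (pi / l * (real m + real n) * y) / 2) (at y)"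
      unfolding F_def[abs_def] using l mn
      by (intro DERIV_add DERIV_cdivide DERIV_ident SS_deriv) auto
    moreover have "1 / 2 + cos (pi / l * (real m + real n) * y) / 2 = cos (pi / l * real m * y) * cos (pi / l * real n * y)"
      unfolding prod_ids(1) using True by (simp add: add_divide_distrib)
    ultimately show ?thesis by simp
  qed
  moreover have "F (2 * l * (R + 1)) - F (2 * l * R) = l"
    using SS_period[of l "real m + real n" R] l R unfolding F_def by (simp add: algebra_simps)
  ultimately show ?thesis using True by auto
next
  case False
  define F where "F y = SS l (real m - real n) y / 2 + SS l (real m + real n) y / 2" for y
  have "(F has_real_derivative cos (pi / l * real m * y) * cos (pi / l * real n * y)) (at y)" for y
  proof -
    have "(F has_real_derivative cos (pi / l * (real m - real n) * y) / 2 + cos (pi / l * (real m + real n) * y) / 2) (at y)"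
      unfolding F_def[abs_def] using l mn False
      by (intro DERIV_add DERIV_cdivide SS_deriv) auto
    moreover have "cos (pi / l * (real m - real n) * y) / 2 + cos (pi / l * (real m + real n) * y) / 2 = cos (pi / l * real m * y) * cos (pi / l * real n * y)"
      unfolding prod_ids(1) by (simp add: add_divide_distrib)
    ultimately show ?thesis by simp
  qed
  moreover have "F (2 * l * (R + 1)) - F (2 * l * R) = 0"
    using SS_period[of l "real m + real n" R] SS_period[of l "real m - real n" R] l R
    unfolding F_def by (simp add: algebra_simps)
  ultimately show ?thesis using False by auto
qed

lemma anti_ss:
  fixes l R :: real and m n :: nat
  assumes l: "l > 0" and R: "R \<in> \<int>" and mn: "m \<ge> 1" "n \<ge> 1"
  shows "\<exists>F. (\<forall>y. (F has_real_derivative sin (pi / l * real m * y) * sin (pi / l * real n * y)) (at y))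
          \<and> F (2 * l * (R + 1)) - F (2 * l * R) = (if m = n then l else 0)"
proof (cases "m = n")
  case True
  define F where "F y = y / 2 - SS l (real m + real n) y / 2" for y
  have "(F has_real_derivative sin (pi / l * real m * y) * sin (pi / l * real n * y)) (at y)" for y
  proof -
    have "(F has_real_derivative 1 / 2 - cos (pi / l * (real m + real n) * y) / 2) (at y)"
      unfolding F_def[abs_def] using l mn
      by (intro DERIV_diff DERIV_cdivide DERIV_ident SS_deriv) auto
    moreover have "1 / 2 - cos (pi / l * (real m + real n) * y) / 2 = sin (pi / l * real m * y) * sin (pi / l * real n * y)"
      unfolding prod_ids(2) using True by (simp add: diff_divide_distrib)
    ultimately show ?thesis by simp
  qed
  moreover have "F (2 * l * (R + 1)) - F (2 * l * R) = l"
    using SS_period[of l "real m + real n" R] l R unfolding F_def by (simp add: algebra_simps)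
  ultimately show ?thesis using True by auto
next
  case False
  define F where "F y = SS l (real m - real n) y / 2 - SS l (real m + real n) y / 2" for y
  have "(F has_real_derivative sin (pi / l * real m * y) * sin (pi / l * real n * y)) (at y)" for y
  proof -
    have "(F has_real_derivative cos (pi / l * (real m - real n) * y) / 2 - cos (pi / l * (real m + real n) * y) / 2) (at y)"
      unfolding F_def[abs_def] using l mn False
      by (intro DERIV_diff DERIV_cdivide SS_deriv) auto
    moreover have "cos (pi / l * (real m - real n) * y) / 2 - cos (pi / l * (real m + real n) * y) / 2 = sin (pi / l * real m * y) * sin (pi / l * real n * y)"
      unfolding prod_ids(2) by (simp add: diff_divide_distrib)
    ultimately show ?thesis by simp
  qed
  moreover have "F (2 * l * (R + 1)) - F (2 * l * R) = 0"
    using SS_period[of l "real m + real n" R] SS_period[of l "real m - real n" R] l R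
    unfolding F_def by (simp add: algebra_simps)
  ultimately show ?thesis using False by auto
qed

lemma anti_sc:
  fixes l R :: real and m n :: nat
  assumes l: "l > 0" and R: "R \<in> \<int>" and mn: "m \<ge> 1" "n \<ge> 1"
  shows "\<exists>F. (\<forall>y. (F has_real_derivative sin (pi / l * real m * y) * cos (pi / l * real n * y)) (at y))
          \<and> F (2 * l * (R + 1)) - F (2 * l * R) = 0"
proof (cases "m = n")
  case True
  define F where "F y = CC l (real m + real n) y / 2" for y
  have "(F has_real_derivative sin (pi / l * real m * y) * cos (pi / l * real n * y)) (at y)" for y
  proof -
    have "(F has_real_derivative sin (pi / l * (real m + real n) * y) / 2) (at y)"
      unfolding F_def[abs_def] using l mn
      by (intro DERIV_cdivide CC_deriv) auto
    moreover have "sin (pi / l * (real m + real n) * y) / 2 = sin (pi / l * real m * y) * cos (pi / l * real n * y)"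
      unfolding prod_ids(3) using True by simp
    ultimately show ?thesis by simp
  qed
  moreover have "F (2 * l * (R + 1)) - F (2 * l * R) = 0"
    using CC_period[of l "real m + real n" R] l R unfolding F_def by (simp add: algebra_simps)
  ultimately show ?thesis by auto
next
  case False
  define F where "F y = CC l (real m + real n) y / 2 + CC l (real m - real n) y / 2" for y
  have "(F has_real_derivative sin (pi / l * real m * y) * cos (pi / l * real n * y)) (at y)" for y
  proof -
    have "(F has_real_derivative sin (pi / l * (real m + real n) * y) / 2 + sin (pi / l * (real m - real n) * y) / 2) (at y)"
      unfolding F_def[abs_def] using l mn False
      by (intro DERIV_add DERIV_cdivide CC_deriv) auto
    moreover have "sin (pi / l * (real m + real n) * y) / 2 + sin (pi / l * (real m - real n) * y) / 2 = sin (pi / l * real m * y) * cos (pi / l * real n * y)"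
      unfolding prod_ids(3) by (simp add: add_divide_distrib)
    ultimately show ?thesis by simp
  qed
  moreover have "F (2 * l * (R + 1)) - F (2 * l * R) = 0"
    using CC_period[of l "real m + real n" R] CC_period[of l "real m - real n" R] l R
    unfolding F_def by (simp add: algebra_simps)
  ultimately show ?thesis by auto
qed

lemma anti_c:
  fixes l R :: real and n :: nat
  assumes l: "l > 0" and R: "R \<in> \<int>" and n: "n \<ge> 1"
  shows "\<exists>F. (\<forall>y. (F has_real_derivative cos (pi / l * real n * y)) (at y))
          \<and> F (2 * l * (R + 1)) - F (2 * l * R) = 0"
  using SS_deriv[of l "real n"] SS_period[of l "real n" R] l R n by (intro exI[of _ "SS l (real n)"]) auto

lemma anti_s:
  fixes l R :: real and n :: nat
  assumes l: "l > 0" and R: "R \<in> \<int>" and n: "n \<ge> 1"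
  shows "\<exists>F. (\<forall>y. (F has_real_derivative sin (pi / l * real n * y)) (at y))
          \<and> F (2 * l * (R + 1)) - F (2 * l * R) = 0"
  using CC_deriv[of l "real n"] CC_period[of l "real n" R] l R n by (intro exI[of _ "CC l (real n)"]) auto

lemma inv_exists:
  fixes f :: "real \<Rightarrow> real"
  assumes mono: "strict_mono_on {T0..} f" and cont: "continuous_on {T0..} f"
    and lim: "filterlim f at_top at_top" and x: "x \<ge> f T0"
  shows "(THE t. t \<ge> T0 \<and> f t = x) \<ge> T0 \<and> f (THE t. t \<ge> T0 \<and> f t = x) = x"
proof (rule theI')
  have "eventually (\<lambda>t. f t \<ge> x) at_top" using lim by (simp add: filterlim_at_top)
  then obtain N where N: "\<And>t. t \<ge> N \<Longrightarrow> f t \<ge> x" by (auto simp: eventually_at_top_linorder)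
  define B where "B = max N T0"
  have B: "B \<ge> T0" "f B \<ge> x" using N unfolding B_def by auto
  have "continuous_on {T0..B} f" using cont by (rule continuous_on_subset) auto
  from IVT'[of f T0 x B, OF x B(2) B(1) this] obtain t where "T0 \<le> t" "t \<le> B" "f t = x" by auto
  then have ex: "\<exists>t. t \<ge> T0 \<and> f t = x" by auto
  show "\<exists>!t. t \<ge> T0 \<and> f t = x"
  proof (rule ex_ex1I[OF ex])
    fix t1 t2 assume "T0 \<le> t1 \<and> f t1 = x" "T0 \<le> t2 \<and> f t2 = x"
    then show "t1 = t2" using strict_mono_on_eqD[OF mono, of t2 t1] by auto
  qed
qed

lemma setdist_intervals:
  fixes a b c d :: real
  assumes "a \<le> b" "b \<le> c" "c \<le> d"
  shows "setdist {a..b} {c..d} = c - b"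
proof (rule antisym)
  have "setdist {a..b} {c..d} \<le> dist b c"
    by (rule setdist_le_dist) (use assms in auto)
  then show "setdist {a..b} {c..d} \<le> c - b" using assms by (simp add: dist_real_def)
  show "c - b \<le> setdist {a..b} {c..d}"
    unfolding le_setdist_iff using assms by (auto simp: dist_real_def)
qed

lemma cv_anti:
  fixes f Zt h :: "real \<Rightarrow> real"
  assumes der: "\<forall>t\<ge>T0. (f has_real_derivative Zt t) (at t within {T0..})"
    and s: "T0 \<le> s" "s \<le> s'" and fs: "f s = x" "f s' = x'"
    and F: "\<exists>F. (\<forall>y. (F has_real_derivative h y) (at y)) \<and> F x' - F x = v"
  shows "integral {s..s'} (\<lambda>t. h (f t) * Zt t) = v"
proof -
  from F obtain F where F1: "\<And>y. (F has_real_derivative h y) (at y)" and F2: "F x' - F x = v" by blast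
  show ?thesis using cv_integral[OF der s F1] fs F2 by simp
qed

lemma primepi_ratio:
  fixes x s :: "nat \<Rightarrow> real" and c :: real
  assumes c: "0 < c" "c < 1"
    and xtop: "filterlim x at_top sequentially"
    and stop: "filterlim s at_top sequentially"
    and ev: "eventually (\<lambda>K. x K \<le> s K \<and> s K - x K \<le> 2 * (c * primepi (s K))) sequentially"
  shows "(\<lambda>K. c * primepi (x K)) \<sim>[sequentially] (\<lambda>K. c * primepi (s K))"
proof (rule asymp_equivI')
  have ptop: "filterlim (\<lambda>K. primepi (s K)) at_top sequentially"
    by (rule filterlim_compose[OF primepi_at_top stop])
  have lim: "((\<lambda>K. primepi (x K) / primepi (s K)) \<longlongrightarrow> 1) sequentially"
  proof (rule tendstoI)
    fix e :: real assume e: "e > 0"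
    then obtain C where C: "\<And>x y. x \<ge> C \<and> y \<ge> 0 \<Longrightarrow> primepi (x + y) - primepi x \<le> e / 4 * y + C"
      using sieve[of "e / 4"] by auto
    have ev1: "eventually (\<lambda>K. x K \<ge> C) sequentially" using xtop by (simp add: filterlim_at_top)
    have ev2: "eventually (\<lambda>K. primepi (s K) \<ge> max (4 * C / e) 1 + 1) sequentially"
      using ptop by (simp add: filterlim_at_top)
    from ev ev1 ev2 show "eventually (\<lambda>K. dist (primepi (x K) / primepi (s K)) 1 < e) sequentially"
    proof eventually_elim
      case (elim K)
      define P where "P = primepi (s K)"
      define Q where "Q = primepi (x K)"
      have P1: "P > 1" "P > 4 * C / e" using elim unfolding P_def by linarith+
      have QP: "Q \<le> P" unfolding P_def Q_def using elim by (intro primepi_mono) auto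
      have h1: "P - Q \<le> e / 4 * (s K - x K) + C"
        using C[of "x K" "s K - x K"] elim unfolding P_def Q_def by auto
      have h2: "e / 4 * (s K - x K) \<le> e / 4 * (2 * (c * P))"
        using elim e unfolding P_def by (intro mult_left_mono) auto
      have h3: "e / 4 * (2 * (c * P)) \<le> e / 2 * P"
        using c e P1 by (simp add: field_simps mult_right_mono)
      have h4: "C < e / 4 * P" using P1(2) e by (simp add: field_simps)
      have h5: "e / 2 * P + e / 4 * P < e * P"
      proof -
        have "e * P > 0" using e P1 by simp
        then show ?thesis by (simp add: field_simps)
      qed
      from h1 h2 h3 h4 h5 have PQ: "P - Q < e * P" by linarith
      have "dist (Q / P) 1 = (P - Q) / P" using P1 QP by (simp add: dist_real_def field_simps abs_if)
      also have "\<dots> < e" using PQ P1 by (simp add: field_simps)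
      finally show ?case unfolding P_def Q_def .
    qed
  qed
  show "((\<lambda>K. c * primepi (x K) / (c * primepi (s K))) \<longlongrightarrow> 1) sequentially"
    using lim c by simp
qed

theorem theorem1:
  fixes mu phi :: "real \<Rightarrow> real" and T0 l :: real
  assumes mu_cont: "continuous_on UNIV mu"
    and mu_ge: "\<forall>y>0. mu y \<ge> 7 * y * ln y"
    and ladder: "jacobs_ladder mu T0 phi"
    and phi1_deriv: "\<forall>t\<ge>T0. (phi1 phi has_real_derivative Ztilde2 mu phi t) (at t within {T0..})"
    and phi1_mono: "strict_mono_on {T0..} (phi1 phi)"
    and phi1_T0: "phi1 phi T0 \<le> T0"
    and phi1_asymp: "(\<lambda>t. t - phi1 phi t) \<sim>[at_top] (\<lambda>t. (1 - euler_mascheroni) * primepi t)"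
    and l_pos: "l > 0"
  shows
    "(\<forall>K::nat. 2 * l * real K \<ge> T0 \<and> 2 * l \<le> 2 * l * real K / ln (2 * l * real K) \<longrightarrow>
       (let J = {2 * l * real K .. 2 * l * (real K + 1)};
            Jo = {phi1_inv phi T0 (2 * l * real K) .. phi1_inv phi T0 (2 * l * (real K + 1))}
        in phi1 phi ` Jo = J \<and>
           (\<forall>m n :: nat. m \<ge> 1 \<and> n \<ge> 1 \<longrightarrow>
              integral Jo (\<lambda>t. cos (pi / l * real m * phi1 phi t) * cos (pi / l * real n * phi1 phi t)
                                * Ztilde2 mu phi t) = (if m = n then l else 0)
            \<and> integral Jo (\<lambda>t. sin (pi / l * real m * phi1 phi t) * sin (pi / l * real n * phi1 phi t)
                                * Ztilde2 mu phi t) = (if m = n then l else 0)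
            \<and> integral Jo (\<lambda>t. sin (pi / l * real m * phi1 phi t) * cos (pi / l * real n * phi1 phi t)
                                * Ztilde2 mu phi t) = 0) \<and>
           (\<forall>n :: nat. n \<ge> 1 \<longrightarrow>
              integral Jo (\<lambda>t. cos (pi / l * real n * phi1 phi t) * Ztilde2 mu phi t) = 0
            \<and> integral Jo (\<lambda>t. sin (pi / l * real n * phi1 phi t) * Ztilde2 mu phi t) = 0)))
   \<and> (\<forall>\<^sub>F K in sequentially. 2 * l * (real K + 1) < phi1_inv phi T0 (2 * l * real K))
   \<and> (\<lambda>K. setdist {2 * l * real K .. 2 * l * (real K + 1)}
                    {phi1_inv phi T0 (2 * l * real K) .. phi1_inv phi T0 (2 * l * (real K + 1))})
       \<sim>[sequentially] (\<lambda>K. (1 - euler_mascheroni) * primepi (2 * l * real K))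
   \<and> filterlim (\<lambda>K. setdist {2 * l * real K .. 2 * l * (real K + 1)}
                    {phi1_inv phi T0 (2 * l * real K) .. phi1_inv phi T0 (2 * l * (real K + 1))})
       at_top sequentially"
proof -
  define f where "f = phi1 phi"
  define Zt where "Zt = Ztilde2 mu phi"
  define c where "c = 1 - (euler_mascheroni :: real)"
  have c0: "0 < c" "c < 1" unfolding c_def using euler_mascheroni_pos euler_mascheroni_less_13_over_22 by auto
  have der: "\<forall>t\<ge>T0. (f has_real_derivative Zt t) (at t within {T0..})"
    using phi1_deriv unfolding f_def Zt_def .
  have mono: "strict_mono_on {T0..} f" using phi1_mono unfolding f_def .
  have cont: "continuous_on {T0..} f"
    using der by (intro DERIV_continuous_on[of _ _ Zt]) auto
  have g_asy: "(\<lambda>t. t - f t) \<sim>[at_top] (\<lambda>t. c * primepi t)"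
    using phi1_asymp unfolding f_def c_def .
  have cpi_top: "filterlim (\<lambda>t. c * primepi t) at_top at_top"
    by (rule filterlim_tendsto_pos_mult_at_top[OF tendsto_const c0(1) primepi_at_top])
  have g_top: "filterlim (\<lambda>t. t - f t) at_top at_top"
    by (rule asymp_equiv_at_top_transfer[OF asymp_equiv_symI[OF g_asy] cpi_top])
  have f_top: "filterlim f at_top at_top"
  proof -
    define r where "r = (1 + 1 / c) / 2"
    have r1: "r > 1" unfolding r_def using c0 by (simp add: field_simps)
    have rc: "r * c = (c + 1) / 2" unfolding r_def using c0 by (simp add: field_simps)
    have ev: "eventually (\<lambda>t. norm (t - f t) \<le> r * norm (c * primepi t)) at_top"
      by (rule asymp_equiv_imp_eventually_le[OF g_asy r1])
    have lin: "filterlim (\<lambda>t. (1 - c) / 2 * t) at_top at_top"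
      using c0 by (intro filterlim_tendsto_pos_mult_at_top[OF tendsto_const _ filterlim_ident]) auto
    show ?thesis
    proof (rule filterlim_at_top_mono[OF lin])
      from ev eventually_ge_at_top[of 0] show "eventually (\<lambda>t. (1 - c) / 2 * t \<le> f t) at_top"
      proof eventually_elim
        case (elim t)
        have "t - f t \<le> r * (c * primepi t)"
          using elim c0 primepi_nonneg[of t] by (auto simp: abs_le_iff)
        also have "\<dots> = (c + 1) / 2 * primepi t" using rc by (simp add: mult.assoc[symmetric])
        also have "\<dots> \<le> (c + 1) / 2 * t" using primepi_le[of t] elim c0 by (intro mult_left_mono) auto
        finally show ?case by (simp add: field_simps)
      qed
    qed
  qed
  have inv_ok: "phi1_inv phi T0 x \<ge> T0 \<and> f (phi1_inv phi T0 x) = x" if "x \<ge> f T0" for x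
    using inv_exists[OF mono cont f_top that] unfolding phi1_inv_def f_def .
  have fT0: "f T0 \<le> T0" using phi1_T0 unfolding f_def .
  have inv_mono: "phi1_inv phi T0 x \<le> phi1_inv phi T0 y" if "f T0 \<le> x" "x \<le> y" for x y
  proof (rule ccontr)
    assume "\<not> ?thesis"
    then have "phi1_inv phi T0 y < phi1_inv phi T0 x" by simp
    then have "f (phi1_inv phi T0 y) < f (phi1_inv phi T0 x)"
      using inv_ok[of x] inv_ok[of y] that by (intro strict_mono_onD[OF mono]) auto
    then show False using inv_ok[of x] inv_ok[of y] that by auto
  qed
  define xs :: "nat \<Rightarrow> real" where "xs K = 2 * l * real K" for K
  define sK :: "nat \<Rightarrow> real" where "sK K = phi1_inv phi T0 (xs K)" for K
  have xs_top: "filterlim xs at_top sequentially"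
    unfolding xs_def using l_pos
    by (intro filterlim_tendsto_pos_mult_at_top[OF tendsto_const _ filterlim_real_sequentially]) auto
  have ev_x: "eventually (\<lambda>K. xs K \<ge> T0) sequentially"
    using xs_top by (simp add: filterlim_at_top)
  have ev_s: "eventually (\<lambda>K. sK K \<ge> T0 \<and> f (sK K) = xs K) sequentially"
    using ev_x
  proof eventually_elim
    case (elim K) then show ?case unfolding sK_def using inv_ok[of "xs K"] fT0 by auto
  qed
  have s_top: "filterlim sK at_top sequentially"
    unfolding filterlim_at_top
  proof
    fix B :: real
    define B' where "B' = max B T0"
    have "eventually (\<lambda>K. xs K > f B') sequentially"
      using xs_top by (simp add: filterlim_at_top_dense)
    with ev_s show "eventually (\<lambda>K. B \<le> sK K) sequentially"
    proof eventually_elim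
      case (elim K)
      show ?case
      proof (rule ccontr)
        assume "\<not> B \<le> sK K"
        then have "sK K < B'" unfolding B'_def by auto
        then have "f (sK K) < f B'" using elim unfolding B'_def
          by (intro strict_mono_onD[OF mono]) auto
        then show False using elim by auto
      qed
    qed
  qed
  have gs_top: "filterlim (\<lambda>K. sK K - f (sK K)) at_top sequentially"
    by (rule filterlim_compose[OF g_top s_top])
  have ev_big: "eventually (\<lambda>K. sK K - f (sK K) > 2 * l) sequentially"
    using gs_top by (simp add: filterlim_at_top_dense)
  have part2: "\<forall>\<^sub>F K in sequentially. 2 * l * (real K + 1) < phi1_inv phi T0 (2 * l * real K)"
    using ev_big ev_s
  proof eventually_elim
    case (elim K) then show ?case unfolding sK_def xs_def by (simp add: algebra_simps)
  qed
  have ev_sd: "eventually (\<lambda>K. setdist {2 * l * real K .. 2 * l * (real K + 1)}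
                    {phi1_inv phi T0 (2 * l * real K) .. phi1_inv phi T0 (2 * l * (real K + 1))}
                 = sK K - f (sK K) - 2 * l) sequentially"
    using ev_big ev_s ev_x
  proof eventually_elim
    case (elim K)
    have hx: "f T0 \<le> 2 * l * real K" using elim fT0 unfolding xs_def by linarith
    have xx: "2 * l * real K \<le> 2 * l * (real K + 1)" using l_pos by (simp add: algebra_simps)
    have "setdist {2 * l * real K .. 2 * l * (real K + 1)}
                    {phi1_inv phi T0 (2 * l * real K) .. phi1_inv phi T0 (2 * l * (real K + 1))}
          = phi1_inv phi T0 (2 * l * real K) - 2 * l * (real K + 1)"
      using elim inv_mono[OF hx xx] xx unfolding sK_def xs_def
      by (intro setdist_intervals) (auto simp: algebra_simps)
    then show ?case using elim unfolding sK_def xs_def by (simp add: algebra_simps)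
  qed
  have A: "(\<lambda>K. sK K - f (sK K)) \<sim>[sequentially] (\<lambda>K. c * primepi (sK K))"
    by (rule asymp_equiv_compose'[OF g_asy s_top])
  have B: "(\<lambda>K. c * primepi (xs K)) \<sim>[sequentially] (\<lambda>K. c * primepi (sK K))"
  proof (rule primepi_ratio[OF c0 xs_top s_top])
    have "eventually (\<lambda>K. norm (sK K - f (sK K)) \<le> 2 * norm (c * primepi (sK K))) sequentially"
      by (rule asymp_equiv_imp_eventually_le[OF A]) simp
    with ev_s ev_big show "eventually (\<lambda>K. xs K \<le> sK K \<and> sK K - xs K \<le> 2 * (c * primepi (sK K))) sequentially"
    proof eventually_elim
      case (elim K)
      then show ?case using c0 primepi_nonneg[of "sK K"] l_pos by auto
    qed
  qed
  have AB: "(\<lambda>K. sK K - f (sK K)) \<sim>[sequentially] (\<lambda>K. c * primepi (xs K))"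
    by (rule asymp_equiv_trans[OF A asymp_equiv_symI[OF B]])
  have cpx_top: "filterlim (\<lambda>K. c * primepi (xs K)) at_top sequentially"
    by (rule filterlim_compose[OF cpi_top xs_top])
  have ev_pos: "eventually (\<lambda>K. c * primepi (xs K) > 0) sequentially"
    using cpx_top by (simp add: filterlim_at_top_dense)
  have D: "(\<lambda>K. sK K - f (sK K) - 2 * l) \<sim>[sequentially] (\<lambda>K. c * primepi (xs K))"
  proof (rule asymp_equivI')
    have t1: "((\<lambda>K. (sK K - f (sK K)) / (c * primepi (xs K))) \<longlongrightarrow> 1) sequentially"
      by (rule asymp_equivD_strong[OF AB]) (use ev_pos in \<open>auto elim: eventually_mono\<close>)
    have t2: "((\<lambda>K. 2 * l / (c * primepi (xs K))) \<longlongrightarrow> 0) sequentially"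
      by (rule tendsto_divide_0[OF tendsto_const filterlim_at_top_imp_at_infinity[OF cpx_top]])
    have "((\<lambda>K. (sK K - f (sK K)) / (c * primepi (xs K)) - 2 * l / (c * primepi (xs K))) \<longlongrightarrow> 1 - 0) sequentially"
      by (rule tendsto_diff[OF t1 t2])
    then show "((\<lambda>K. (sK K - f (sK K) - 2 * l) / (c * primepi (xs K))) \<longlongrightarrow> 1) sequentially"
      by (simp add: diff_divide_distrib)
  qed
  have SD: "(\<lambda>K. setdist {2 * l * real K .. 2 * l * (real K + 1)}
                    {phi1_inv phi T0 (2 * l * real K) .. phi1_inv phi T0 (2 * l * (real K + 1))})
       \<sim>[sequentially] (\<lambda>K. (1 - euler_mascheroni) * primepi (2 * l * real K))"
  proof -
    have "(\<lambda>K. sK K - f (sK K) - 2 * l) \<sim>[sequentially] (\<lambda>K. (1 - euler_mascheroni) * primepi (2 * l * real K))"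
      using D unfolding c_def xs_def .
    then show ?thesis
      using asymp_equiv_cong[OF ev_sd always_eventually[of "\<lambda>K. (1 - euler_mascheroni) * primepi (2 * l * real K) = (1 - euler_mascheroni) * primepi (2 * l * real K)"]]
      by simp
  qed
  have SDtop: "filterlim (\<lambda>K. setdist {2 * l * real K .. 2 * l * (real K + 1)}
                    {phi1_inv phi T0 (2 * l * real K) .. phi1_inv phi T0 (2 * l * (real K + 1))})
       at_top sequentially"
    by (rule asymp_equiv_at_top_transfer[OF asymp_equiv_symI[OF SD]]) (use cpx_top in \<open>simp add: c_def xs_def\<close>)
  show ?thesis
    apply (intro conjI)
    subgoal
      apply (intro allI impI)
      subgoal for K
        unfolding Let_def f_def[symmetric] Zt_def[symmetric]
      proof -
        assume H: "2 * l * real K \<ge> T0 \<and> 2 * l \<le> 2 * l * real K / ln (2 * l * real K)"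
        have hx: "f T0 \<le> 2 * l * real K" using H fT0 by linarith
        have hx': "f T0 \<le> 2 * l * (real K + 1)" using hx l_pos by (simp add: algebra_simps)
        have xx: "2 * l * real K \<le> 2 * l * (real K + 1)" using l_pos by (simp add: algebra_simps)
        note s1 = inv_ok[OF hx] and s2 = inv_ok[OF hx']
        have ss: "phi1_inv phi T0 (2 * l * real K) \<le> phi1_inv phi T0 (2 * l * (real K + 1))"
          by (rule inv_mono[OF hx xx])
        have s1': "T0 \<le> phi1_inv phi T0 (2 * l * real K)" "f (phi1_inv phi T0 (2 * l * real K)) = 2 * l * real K"
          using s1 by auto
        have s2': "f (phi1_inv phi T0 (2 * l * (real K + 1))) = 2 * l * (real K + 1)"
          using s2 by auto
        have Kint: "real K \<in> \<int>" by simp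
        have img: "f ` {phi1_inv phi T0 (2 * l * real K) .. phi1_inv phi T0 (2 * l * (real K + 1))} =
                   {2 * l * real K .. 2 * l * (real K + 1)}"
        proof
          show "f ` {phi1_inv phi T0 (2 * l * real K) .. phi1_inv phi T0 (2 * l * (real K + 1))} \<subseteq>
                   {2 * l * real K .. 2 * l * (real K + 1)}"
          proof
            fix y assume "y \<in> f ` {phi1_inv phi T0 (2 * l * real K) .. phi1_inv phi T0 (2 * l * (real K + 1))}"
            then obtain t where t: "t \<in> {phi1_inv phi T0 (2 * l * real K) .. phi1_inv phi T0 (2 * l * (real K + 1))}" "y = f t" by auto
            have "f (phi1_inv phi T0 (2 * l * real K)) \<le> f t"
              using t s1' by (intro strict_mono_on_leD[OF mono]) auto
            moreover have "f t \<le> f (phi1_inv phi T0 (2 * l * (real K + 1)))"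
              using t s1' by (intro strict_mono_on_leD[OF mono]) auto
            ultimately show "y \<in> {2 * l * real K .. 2 * l * (real K + 1)}" using t s1' s2' by auto
          qed
          show "{2 * l * real K .. 2 * l * (real K + 1)} \<subseteq>
                  f ` {phi1_inv phi T0 (2 * l * real K) .. phi1_inv phi T0 (2 * l * (real K + 1))}"
          proof
            fix y assume y: "y \<in> {2 * l * real K .. 2 * l * (real K + 1)}"
            have "continuous_on {phi1_inv phi T0 (2 * l * real K) .. phi1_inv phi T0 (2 * l * (real K + 1))} f"
              by (rule continuous_on_subset[OF cont]) (use s1' in auto)
            from IVT'[of f, OF _ _ ss this] y s1' s2'
            show "y \<in> f ` {phi1_inv phi T0 (2 * l * real K) .. phi1_inv phi T0 (2 * l * (real K + 1))}"
              by force
          qed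
        qed
        show "f ` {phi1_inv phi T0 (2 * l * real K) .. phi1_inv phi T0 (2 * l * (real K + 1))} =
                   {2 * l * real K .. 2 * l * (real K + 1)} \<and>
          (\<forall>m n :: nat. m \<ge> 1 \<and> n \<ge> 1 \<longrightarrow>
              integral {phi1_inv phi T0 (2 * l * real K) .. phi1_inv phi T0 (2 * l * (real K + 1))} (\<lambda>t. cos (pi / l * real m * f t) * cos (pi / l * real n * f t)
                                * Zt t) = (if m = n then l else 0)
            \<and> integral {phi1_inv phi T0 (2 * l * real K) .. phi1_inv phi T0 (2 * l * (real K + 1))} (\<lambda>t. sin (pi / l * real m * f t) * sin (pi / l * real n * f t)
                                * Zt t) = (if m = n then l else 0)
            \<and> integral {phi1_inv phi T0 (2 * l * real K) .. phi1_inv phi T0 (2 * l * (real K + 1))} (\<lambda>t. sin (pi / l * real m * f t) * cos (pi / l * real n * f t)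
                                * Zt t) = 0) \<and>
           (\<forall>n :: nat. n \<ge> 1 \<longrightarrow>
              integral {phi1_inv phi T0 (2 * l * real K) .. phi1_inv phi T0 (2 * l * (real K + 1))} (\<lambda>t. cos (pi / l * real n * f t) * Zt t) = 0
            \<and> integral {phi1_inv phi T0 (2 * l * real K) .. phi1_inv phi T0 (2 * l * (real K + 1))} (\<lambda>t. sin (pi / l * real n * f t) * Zt t) = 0)"
        proof (intro conjI allI impI img)
          fix m n :: nat assume mn: "m \<ge> 1 \<and> n \<ge> 1"
          then have m1: "m \<ge> 1" and n1: "n \<ge> 1" by auto
          show "integral {phi1_inv phi T0 (2 * l * real K) .. phi1_inv phi T0 (2 * l * (real K + 1))} (\<lambda>t. cos (pi / l * real m * f t) * cos (pi / l * real n * f t)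
                                * Zt t) = (if m = n then l else 0)"
            by (rule cv_anti[OF der s1'(1) ss s1'(2) s2' anti_cc[OF l_pos Kint m1 n1]])
          show "integral {phi1_inv phi T0 (2 * l * real K) .. phi1_inv phi T0 (2 * l * (real K + 1))} (\<lambda>t. sin (pi / l * real m * f t) * sin (pi / l * real n * f t)
                                * Zt t) = (if m = n then l else 0)"
            by (rule cv_anti[OF der s1'(1) ss s1'(2) s2' anti_ss[OF l_pos Kint m1 n1]])
          show "integral {phi1_inv phi T0 (2 * l * real K) .. phi1_inv phi T0 (2 * l * (real K + 1))} (\<lambda>t. sin (pi / l * real m * f t) * cos (pi / l * real n * f t)
                                * Zt t) = 0"
            by (rule cv_anti[OF der s1'(1) ss s1'(2) s2' anti_sc[OF l_pos Kint m1 n1]])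
        next
          fix n :: nat assume n1: "n \<ge> 1"
          show "integral {phi1_inv phi T0 (2 * l * real K) .. phi1_inv phi T0 (2 * l * (real K + 1))} (\<lambda>t. cos (pi / l * real n * f t) * Zt t) = 0"
            by (rule cv_anti[OF der s1'(1) ss s1'(2) s2' anti_c[OF l_pos Kint n1]])
          show "integral {phi1_inv phi T0 (2 * l * real K) .. phi1_inv phi T0 (2 * l * (real K + 1))} (\<lambda>t. sin (pi / l * real n * f t) * Zt t) = 0"
            by (rule cv_anti[OF der s1'(1) ss s1'(2) s2' anti_s[OF l_pos Kint n1]])
        qed
      qed
      done
    subgoal by (rule part2)
    subgoal by (rule SD)
    subgoal by (rule SDtop)
    done
qed

end
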